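(* Let $\gamma\ge 0$ and define $R(A)=\mathrm{vol}_g(A)+\nu_S\,\mathrm{unit}(A)+\gamma\,\mathrm{pen}(A)$ for $A\subseteq V'$. Use the convention $x/0=+\infty$ for $x>0$. 1. For every $f\in\mathbb{R}^m_+\setminus\{0\}$, $$\frac{R^L(f)}{\mathrm{assoc}_S^L(f)}\ \ge\ \min_{i=1,\dots,m}\frac{R(A_i)}{\mathrm{assoc}_S(A_i)},\qquad A_i=\{j\in V': f_j\ge f_i\}.$$ 2. Consequently, $$\min_{f\in\mathbb{R}^m_+\setminus\{0\}}\frac{R^L(f)}{\mathrm{assoc}^L_S(f)}=\min_{\emptyset\ne A\subseteq V'}\frac{R(A)}{\mathrm{assoc}_S(A)},$$ and the minimum on the left is attained. 3. For any minimizer $f^*$ of the left-hand problem, a set $A^*$ chosen among the thresholded sets $A_i=\{j\in V':f^*_j\ge f^*_i\}$, $i=1,\dots,m$, so as to minimize $R(A_i)/\mathrm{assoc}_S(A_i)$, is a minimizer of the right-hand (set) problem.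
   Context: Let $V$ be a finite vertex set with symmetric nonnegative weights $w_{ij}=w_{ji}\ge0$ and $w_{ii}=0$. - $d_i=\sum_{j\in V}w_{ij}$, and $\mathrm{vol}_h(A)=\sum_{i\in A}h_i$. - $\mathrm{assoc}(A)=\sum_{i,j\in A}w_{ij}$ (ordered pairs), and $\mathrm{cut}(A,B)=\sum_{i\in A,j\in B}w_{ij}$. - Fix $S\subseteq V$, $V'=V\setminus S$, $m=|V'|$, and identify $V'$ with $\{1,\dots,m\}$. - $d^S_i=\sum_{j\in S}w_{ij}$, $g:V\to(0,\infty)$, $\mu_S=\mathrm{assoc}(S)$, $\nu_S=\mathrm{vol}_g(S)$. - $\mathrm{unit}(A)=1$ if $A\ne\emptyset$ and $0$ otherwise. - $\mathrm{assoc}_S(A)=\mathrm{vol}_d(A)-\mathrm{cut}(A,V'\setminus A)+\mathrm{vol}_{d^S}(A)+\mu_S\,\mathrm{unit}(A)$ for $A\subseteq V'$. Constraint data: $M_1,\dots,M_p\in[0,\infty)^V$; reals $k_j,l_j$; a symmetric $\mathrm{dist}:V\times V\to[0,\infty)$ with $\mathrm{dist}(u,u)=0$; and $d_0\ge0$. Penalty: $\mathrm{pen}(\emptyset)=0$, and for $A\ne\emptyset$, $$\mathrm{pen}(A)=\sum_{j}\max\{0,\mathrm{vol}_{M_j}(A)-l_j\}+\sum_j\max\{0,k_j-\mathrm{vol}_{M_j}(A)\}+\sum_{u,v\in A}\max\{0,\mathrm{dist}(u,v)-d_0\}.$$ Lovasz extension: for a set function $F:2^{V'}\to\mathbb{R}$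 with $F(\emptyset)=0$ and $f\in\mathbb{R}^m$, choose a permutation $\pi$ with $f_{\pi(1)}\le\dots\le f_{\pi(m)}$ and let $B_i=\{\pi(i),\dots,\pi(m)\}$. Then $$F^L(f)=\sum_{i=1}^{m-1}F(B_{i+1})\,(f_{\pi(i+1)}-f_{\pi(i)})+F(V')\,f_{\pi(1)}.$$ *)

theory Defs
  imports Main "HOL-Library.Extended_Real"
begin

definition vol :: "('a \<Rightarrow> real) \<Rightarrow> 'a set \<Rightarrow> real" where
  "vol h A = (\<Sum>i\<in>A. h i)"

definition assoc :: "('a \<Rightarrow> 'a \<Rightarrow> real) \<Rightarrow> 'a set \<Rightarrow> real" where
  "assoc w A = (\<Sum>i\<in>A. \<Sum>j\<in>A. w i j)"

definition cut :: "('a \<Rightarrow> 'a \<Rightarrow> real) \<Rightarrow> 'a set \<Rightarrow> 'a set \<Rightarrow> real" where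
  "cut w A B = (\<Sum>i\<in>A. \<Sum>j\<in>B. w i j)"

definition unit_set :: "'a set \<Rightarrow> real" where
  "unit_set A = (if A = {} then 0 else 1)"

definition assocS :: "('a \<Rightarrow> 'a \<Rightarrow> real) \<Rightarrow> 'a set \<Rightarrow> 'a set \<Rightarrow> 'a set \<Rightarrow> real" where
  "assocS w V S A =
     vol (\<lambda>i. \<Sum>j\<in>V. w i j) A - cut w A ((V - S) - A)
     + vol (\<lambda>i. \<Sum>j\<in>S. w i j) A + assoc w S * unit_set A"

definition pen :: "nat \<Rightarrow> (nat \<Rightarrow> 'a \<Rightarrow> real) \<Rightarrow> (nat \<Rightarrow> real) \<Rightarrow> (nat \<Rightarrow> real)
    \<Rightarrow> ('a \<Rightarrow> 'a \<Rightarrow> real) \<Rightarrow> real \<Rightarrow> 'a set \<Rightarrow> real" where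
  "pen p M k l dst d0 A =
     (if A = {} then 0 else
        (\<Sum>j<p. max 0 (vol (M j) A - l j))
      + (\<Sum>j<p. max 0 (k j - vol (M j) A))
      + (\<Sum>u\<in>A. \<Sum>v\<in>A. max 0 (dst u v - d0)))"

definition lovasz :: "('a set \<Rightarrow> real) \<Rightarrow> 'a set \<Rightarrow> ('a \<Rightarrow> real) \<Rightarrow> real" where
  "lovasz F V' f =
     (let m = card V';
          \<pi> = (SOME \<pi>. bij_betw \<pi> {1..m} V' \<and>
                   (\<forall>i j. 1 \<le> i \<longrightarrow> i \<le> j \<longrightarrow> j \<le> m \<longrightarrow> f (\<pi> i) \<le> f (\<pi> j)));
          B = (\<lambda>i. \<pi> ` {i..m})
      in (\<Sum>i\<in>{1..m-1}. F (B (i+1)) * (f (\<pi> (i+1)) - f (\<pi> i))) + F V' * f (\<pi> 1))"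

text \<open>Ratio with the convention x/0 = +infinity (numerators are positive here).\<close>
definition ratio :: "real \<Rightarrow> real \<Rightarrow> ereal" where
  "ratio x y = (if y = 0 then PInfty else ereal (x / y))"

definition nonneg_nonzero :: "'a set \<Rightarrow> ('a \<Rightarrow> real) set" where
  "nonneg_nonzero V' = {f. (\<forall>x\<in>V'. 0 \<le> f x) \<and> (\<exists>x\<in>V'. f x \<noteq> 0) \<and> (\<forall>x. x \<notin> V' \<longrightarrow> f x = 0)}"

definition thr :: "'a set \<Rightarrow> ('a \<Rightarrow> real) \<Rightarrow> 'a \<Rightarrow> 'a set" where
  "thr V' f i = {j\<in>V'. f i \<le> f j}"

end

theory Submission
  imports Defs
begin

lemma mediant:
  fixes I :: "nat set" and c a b :: "nat \<Rightarrow> real" and r :: ereal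
  assumes fin: "finite I" and c0: "\<forall>i\<in>I. 0 \<le> c i" and a0: "\<forall>i\<in>I. 0 \<le> a i"
    and b0: "\<forall>i\<in>I. 0 \<le> b i"
    and hr: "\<forall>i\<in>I. 0 < c i \<longrightarrow> r \<le> ratio (a i) (b i)"
  shows "r \<le> ratio (\<Sum>i\<in>I. c i * a i) (\<Sum>i\<in>I. c i * b i)"
proof (cases "(\<Sum>i\<in>I. c i * b i) = 0")
  case True thus ?thesis by (simp add: ratio_def)
next
  case False
  then obtain i where i: "i \<in> I" "c i * b i \<noteq> 0"
    using sum.not_neutral_contains_not_neutral by blast
  have ci: "c i > 0" "b i > 0" using i c0 b0 by (auto simp: less_le)
  have pos: "(\<Sum>i\<in>I. c i * b i) > 0" using False c0 b0
    by (metis (no_types, lifting) less_eq_real_def mult_nonneg_nonneg sum_nonneg)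
  show ?thesis
  proof (cases r)
    case (real \<rho>)
    have key: "\<rho> * (c j * b j) \<le> c j * a j" if j: "j \<in> I" for j
    proof (cases "c j = 0")
      case True thus ?thesis by simp
    next
      case False
      hence cj: "c j > 0" using c0 j by (auto simp: less_le)
      have rr: "r \<le> ratio (a j) (b j)" using hr j cj by blast
      show ?thesis
      proof (cases "b j = 0")
        case True thus ?thesis using a0 j cj by simp
      next
        case False
        hence bj: "b j > 0" using b0 j by (auto simp: less_le)
        have "\<rho> \<le> a j / b j" using rr False real by (simp add: ratio_def)
        hence "\<rho> * b j \<le> a j" using bj by (simp add: pos_le_divide_eq)
        hence "c j * (\<rho> * b j) \<le> c j * a j" using cj by (simp add: mult_left_mono)
        thus ?thesis by (simp add: algebra_simps)
      qed
    qed
    have "\<rho> * (\<Sum>i\<in>I. c i * b i) \<le> (\<Sum>i\<in>I. c i * a i)"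
      unfolding sum_distrib_left using key by (simp add: sum_mono)
    hence "\<rho> \<le> (\<Sum>i\<in>I. c i * a i) / (\<Sum>i\<in>I. c i * b i)"
      using pos by (simp add: pos_le_divide_eq)
    thus ?thesis using real False by (simp add: ratio_def)
  next
    case PInf
    have "r \<le> ratio (a i) (b i)" using hr i ci by blast
    thus ?thesis using PInf ci by (simp add: ratio_def)
  next
    case MInf thus ?thesis by simp
  qed
qed

lemma ex_sorted_bij:
  fixes f :: "'a \<Rightarrow> real"
  assumes "finite V'"
  shows "\<exists>\<pi>. bij_betw \<pi> {1..card V'} V' \<and>
     (\<forall>i j. 1 \<le> i \<longrightarrow> i \<le> j \<longrightarrow> j \<le> card V' \<longrightarrow> f (\<pi> i) \<le> f (\<pi> j))"
proof -
  obtain xs where xs: "set xs = V'" "distinct xs" using finite_distinct_list assms by blast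
  define ys where "ys = sort_key f xs"
  have ys: "set ys = V'" "distinct ys" "sorted (map f ys)" "length ys = card V'"
    using xs unfolding ys_def by (auto simp: distinct_card[symmetric])
  define \<pi> where "\<pi> i = ys ! (i - 1)" for i
  have inj: "inj_on \<pi> {1..card V'}"
    unfolding inj_on_def \<pi>_def using ys by (auto simp: nth_eq_iff_index_eq)
  have img: "\<pi> ` {1..card V'} = V'"
  proof
    show "\<pi> ` {1..card V'} \<subseteq> V'" unfolding \<pi>_def using ys by auto
    show "V' \<subseteq> \<pi> ` {1..card V'}"
    proof
      fix x assume "x \<in> V'"
      then obtain k where k: "k < length ys" "ys ! k = x" using ys by (metis in_set_conv_nth)
      hence "Suc k \<in> {1..card V'}" "\<pi> (Suc k) = x" using ys by (auto simp: \<pi>_def)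
      thus "x \<in> \<pi> ` {1..card V'}" by blast
    qed
  qed
  have srt: "\<forall>i j. 1 \<le> i \<longrightarrow> i \<le> j \<longrightarrow> j \<le> card V' \<longrightarrow> f (\<pi> i) \<le> f (\<pi> j)"
  proof (intro allI impI)
    fix i j :: nat assume h: "1 \<le> i" "i \<le> j" "j \<le> card V'"
    have "map f ys ! (i - 1) \<le> map f ys ! (j - 1)"
      using sorted_nth_mono[OF ys(3), of "i - 1" "j - 1"] h ys by auto
    thus "f (\<pi> i) \<le> f (\<pi> j)" using h ys by (simp add: \<pi>_def)
  qed
  show ?thesis using inj img srt unfolding bij_betw_def by blast
qed

definition Cf :: "(nat \<Rightarrow> real) \<Rightarrow> nat \<Rightarrow> real" where
  "Cf g i = (if i = 0 then g 1 else g (i+1) - g i)"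

lemma Cf_tele: "(\<Sum>i<Suc n. Cf g i) = g (Suc n)"
  by (induction n) (auto simp: Cf_def)

lemma lovasz_repr:
  fixes f :: "'a \<Rightarrow> real"
  assumes fin: "finite V'" and ne: "V' \<noteq> {}"
  obtains \<pi> where "bij_betw \<pi> {1..card V'} V'"
    "\<forall>i j. 1 \<le> i \<longrightarrow> i \<le> j \<longrightarrow> j \<le> card V' \<longrightarrow> f (\<pi> i) \<le> f (\<pi> j)"
    "\<And>F. lovasz F V' f = (\<Sum>i<card V'. Cf (f \<circ> \<pi>) i * F (\<pi> ` {i+1..card V'}))"
proof -
  define m where "m = card V'"
  have m1: "m \<ge> 1" using fin ne unfolding m_def by (simp add: Suc_le_eq card_gt_0_iff)
  define \<pi> where "\<pi> = (SOME \<pi>. bij_betw \<pi> {1..m} V' \<and>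
                   (\<forall>i j. 1 \<le> i \<longrightarrow> i \<le> j \<longrightarrow> j \<le> m \<longrightarrow> f (\<pi> i) \<le> f (\<pi> j)))"
  have P: "bij_betw \<pi> {1..m} V' \<and>
                   (\<forall>i j. 1 \<le> i \<longrightarrow> i \<le> j \<longrightarrow> j \<le> m \<longrightarrow> f (\<pi> i) \<le> f (\<pi> j))"
    unfolding \<pi>_def m_def using ex_sorted_bij[OF fin, of f] by (rule someI_ex)
  have eq: "lovasz F V' f = (\<Sum>i<m. Cf (f \<circ> \<pi>) i * F (\<pi> ` {i+1..m}))" for F
  proof -
    have L: "lovasz F V' f = (\<Sum>i\<in>{1..m-1}. F (\<pi> ` {i+1..m}) * (f (\<pi> (i+1)) - f (\<pi> i))) + F V' * f (\<pi> 1)"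
      unfolding lovasz_def Let_def \<pi>_def m_def by simp
    have U: "{..<m} = insert 0 {1..m-1}" using m1 by auto
    have "(\<Sum>i<m. Cf (f \<circ> \<pi>) i * F (\<pi> ` {i+1..m})) =
       Cf (f \<circ> \<pi>) 0 * F (\<pi> ` {1..m}) + (\<Sum>i\<in>{1..m-1}. Cf (f \<circ> \<pi>) i * F (\<pi> ` {i+1..m}))"
      unfolding U by (simp add: sum.insert)
    also have "(\<Sum>i\<in>{1..m-1}. Cf (f \<circ> \<pi>) i * F (\<pi> ` {i+1..m})) =
       (\<Sum>i\<in>{1..m-1}. F (\<pi> ` {i+1..m}) * (f (\<pi> (i+1)) - f (\<pi> i)))"
      by (rule sum.cong) (auto simp: Cf_def)
    also have "\<pi> ` {1..m} = V'" using P by (simp add: bij_betw_def)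
    finally show ?thesis using L by (simp add: Cf_def o_def)
  qed
  show ?thesis using that P eq unfolding m_def by blast
qed

lemma thr_eq:
  fixes f :: "'a \<Rightarrow> real" and \<pi> :: "nat \<Rightarrow> 'a" and m i :: nat
  assumes bij: "bij_betw \<pi> {1..m} V'"
    and srt: "\<forall>i j. 1 \<le> i \<longrightarrow> i \<le> j \<longrightarrow> j \<le> m \<longrightarrow> f (\<pi> i) \<le> f (\<pi> j)"
    and im: "i < m" and c: "i = 0 \<or> f (\<pi> i) < f (\<pi> (i+1))"
  shows "\<pi> ` {i+1..m} = thr V' f (\<pi> (i+1))"
proof
  have img: "\<pi> ` {1..m} = V'" using bij by (simp add: bij_betw_def)
  show "\<pi> ` {i+1..m} \<subseteq> thr V' f (\<pi> (i+1))"
  proof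
    fix x assume "x \<in> \<pi> ` {i+1..m}"
    then obtain k where k: "k \<in> {i+1..m}" "x = \<pi> k" by blast
    have "k \<in> {1..m}" using k(1) by simp
    hence "x \<in> V'" using k img by blast
    moreover have "f (\<pi> (i+1)) \<le> f x" using srt k by auto
    ultimately show "x \<in> thr V' f (\<pi> (i+1))" by (simp add: thr_def)
  qed
  show "thr V' f (\<pi> (i+1)) \<subseteq> \<pi> ` {i+1..m}"
  proof
    fix x assume "x \<in> thr V' f (\<pi> (i+1))"
    hence x: "x \<in> V'" "f (\<pi> (i+1)) \<le> f x" by (auto simp: thr_def)
    then obtain k where k: "k \<in> {1..m}" "x = \<pi> k" using img by blast
    have "k \<ge> i + 1"
    proof (rule ccontr)
      assume "\<not> k \<ge> i + 1"
      hence "k \<le> i" by simp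
      hence "i \<noteq> 0" using k by auto
      hence lt: "f (\<pi> i) < f (\<pi> (i+1))" using c by auto
      have "f (\<pi> k) \<le> f (\<pi> i)" using srt k \<open>k \<le> i\<close> im by auto
      thus False using lt x k by auto
    qed
    thus "x \<in> \<pi> ` {i+1..m}" using k by auto
  qed
qed

lemma part1:
  fixes f :: "'a \<Rightarrow> real"
  assumes fin: "finite V'" and ne: "V' \<noteq> {}" and fN: "f \<in> nonneg_nonzero V'"
    and R0: "\<forall>A. A \<subseteq> V' \<longrightarrow> 0 \<le> R A" and a0: "\<forall>A. A \<subseteq> V' \<longrightarrow> 0 \<le> aS A"
  shows "Min ((\<lambda>i. ratio (R (thr V' f i)) (aS (thr V' f i))) ` V')
           \<le> ratio (lovasz R V' f) (lovasz aS V' f)"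
proof -
  define m where "m = card V'"
  obtain \<pi> where bij0: "bij_betw \<pi> {1..card V'} V'"
    and srt0: "\<forall>i j. 1 \<le> i \<longrightarrow> i \<le> j \<longrightarrow> j \<le> card V' \<longrightarrow> f (\<pi> i) \<le> f (\<pi> j)"
    and rep0: "\<And>F. lovasz F V' f = (\<Sum>i<card V'. Cf (f \<circ> \<pi>) i * F (\<pi> ` {i+1..card V'}))"
    by (rule lovasz_repr[OF fin ne, of f]) blast
  note bij = bij0[folded m_def] and srt = srt0[folded m_def] and rep = rep0[folded m_def]
  have img: "\<pi> ` {1..m} = V'" using bij by (simp add: bij_betw_def)
  have sub: "\<pi> ` {i+1..m} \<subseteq> V'" for i using img by auto
  have f0: "\<forall>x\<in>V'. 0 \<le> f x" using fN by (simp add: nonneg_nonzero_def)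
  have c0: "\<forall>i\<in>{..<m}. 0 \<le> Cf (f \<circ> \<pi>) i"
  proof
    fix i assume i: "i \<in> {..<m}"
    show "0 \<le> Cf (f \<circ> \<pi>) i"
    proof (cases "i = 0")
      case True
      have "1 \<in> {1..m}" using i by simp
      hence "\<pi> 1 \<in> V'" using img by blast
      thus ?thesis using True f0 by (simp add: Cf_def)
    next
      case False
      thus ?thesis using srt i by (simp add: Cf_def)
    qed
  qed
  have fin_img: "finite ((\<lambda>i. ratio (R (thr V' f i)) (aS (thr V' f i))) ` V')" using fin by simp
  have hr: "\<forall>i\<in>{..<m}. 0 < Cf (f \<circ> \<pi>) i \<longrightarrow>
      Min ((\<lambda>i. ratio (R (thr V' f i)) (aS (thr V' f i))) ` V') \<le> ratio (R (\<pi> ` {i+1..m})) (aS (\<pi> ` {i+1..m}))"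
  proof (intro ballI impI)
    fix i assume i: "i \<in> {..<m}" and cp: "0 < Cf (f \<circ> \<pi>) i"
    have c: "i = 0 \<or> f (\<pi> i) < f (\<pi> (i+1))" using cp by (auto simp: Cf_def split: if_splits)
    have eq: "\<pi> ` {i+1..m} = thr V' f (\<pi> (i+1))"
      using thr_eq[OF bij srt _ c] i by simp
    have "i+1 \<in> {1..m}" using i by simp
    hence "\<pi> (i+1) \<in> V'" using img by blast
    thus "Min ((\<lambda>i. ratio (R (thr V' f i)) (aS (thr V' f i))) ` V') \<le> ratio (R (\<pi> ` {i+1..m})) (aS (\<pi> ` {i+1..m}))"
      unfolding eq using fin_img by (intro Min_le) (auto intro: imageI)
  qed
  show ?thesis unfolding rep
    by (rule mediant[OF _ c0 _ _ hr]) (use sub R0 a0 in auto)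
qed

lemma lovasz_ind:
  fixes F :: "'a set \<Rightarrow> real"
  assumes fin: "finite V'" and AV: "A \<subseteq> V'" and Ane: "A \<noteq> {}"
  shows "lovasz F V' (\<lambda>x. if x \<in> A then 1 else 0) = F A"
proof -
  define f :: "'a \<Rightarrow> real" where "f = (\<lambda>x. if x \<in> A then 1 else 0)"
  have ne: "V' \<noteq> {}" using AV Ane by auto
  define m where "m = card V'"
  have m1: "m \<ge> 1" using fin ne unfolding m_def by (simp add: Suc_le_eq card_gt_0_iff)
  obtain \<pi> where bij0: "bij_betw \<pi> {1..card V'} V'"
    and srt0: "\<forall>i j. 1 \<le> i \<longrightarrow> i \<le> j \<longrightarrow> j \<le> card V' \<longrightarrow> f (\<pi> i) \<le> f (\<pi> j)"
    and rep0: "\<And>F. lovasz F V' f = (\<Sum>i<card V'. Cf (f \<circ> \<pi>) i * F (\<pi> ` {i+1..card V'}))"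
    by (rule lovasz_repr[OF fin ne, of f]) blast
  note bij = bij0[folded m_def] and srt = srt0[folded m_def] and rep = rep0[folded m_def]
  have img: "\<pi> ` {1..m} = V'" using bij by (simp add: bij_betw_def)
  have trm: "Cf (f \<circ> \<pi>) i * F (\<pi> ` {i+1..m}) = Cf (f \<circ> \<pi>) i * F A" if i: "i < m" for i
  proof (cases "Cf (f \<circ> \<pi>) i = 0")
    case True thus ?thesis by simp
  next
    case False
    have ge: "Cf (f \<circ> \<pi>) i \<ge> 0" using srt i by (auto simp: Cf_def f_def)
    hence cp: "Cf (f \<circ> \<pi>) i > 0" using False by simp
    have c: "i = 0 \<or> f (\<pi> i) < f (\<pi> (i+1))" using cp by (auto simp: Cf_def split: if_splits)
    have eq: "\<pi> ` {i+1..m} = thr V' f (\<pi> (i+1))"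
      using thr_eq[OF bij srt i c] .
    have one: "f (\<pi> (i+1)) = 1"
    proof (rule ccontr)
      assume "f (\<pi> (i+1)) \<noteq> 1"
      hence "f (\<pi> (i+1)) = 0" by (simp add: f_def split: if_splits)
      moreover have "Cf (f \<circ> \<pi>) i \<le> f (\<pi> (i+1))" by (simp add: Cf_def f_def)
      ultimately have "Cf (f \<circ> \<pi>) i \<le> 0" by simp
      thus False using cp by simp
    qed
    have "thr V' f (\<pi> (i+1)) = A" using one AV by (auto simp: thr_def f_def split: if_splits)
    thus ?thesis using eq by simp
  qed
  have "lovasz F V' f = (\<Sum>i<m. Cf (f \<circ> \<pi>) i * F A)" unfolding rep by (rule sum.cong[OF refl]) (rule trm, simp)
  also have "\<dots> = F A * (\<Sum>i<m. Cf (f \<circ> \<pi>) i)" by (simp add: sum_distrib_left mult.commute)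
  also have "(\<Sum>i<m. Cf (f \<circ> \<pi>) i) = f (\<pi> m)"
    using Cf_tele[of "f \<circ> \<pi>" "m - 1"] m1 by simp
  also have "f (\<pi> m) = 1"
  proof -
    obtain a where a: "a \<in> A" using Ane by blast
    then obtain k where k: "k \<in> {1..m}" "\<pi> k = a" using img AV by blast
    have "f (\<pi> k) \<le> f (\<pi> m)" using srt k by auto
    thus ?thesis using k a by (simp add: f_def split: if_splits)
  qed
  finally show ?thesis unfolding f_def by simp
qed

theorem theorem2:
  fixes V S :: "'a set" and w :: "'a \<Rightarrow> 'a \<Rightarrow> real" and g :: "'a \<Rightarrow> real"
    and p :: nat and M :: "nat \<Rightarrow> 'a \<Rightarrow> real" and k l :: "nat \<Rightarrow> real"
    and dst :: "'a \<Rightarrow> 'a \<Rightarrow> real" and d0 \<gamma> :: real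
    and V' :: "'a set" and R :: "'a set \<Rightarrow> real" and aS :: "'a set \<Rightarrow> real"
  assumes finV: "finite V" and SV: "S \<subseteq> V"
    and w_sym: "\<forall>i\<in>V. \<forall>j\<in>V. w i j = w j i"
    and w_nonneg: "\<forall>i\<in>V. \<forall>j\<in>V. 0 \<le> w i j"
    and w_diag: "\<forall>i\<in>V. w i i = 0"
    and g_pos: "\<forall>i\<in>V. 0 < g i"
    and M_nonneg: "\<forall>j<p. \<forall>x\<in>V. 0 \<le> M j x"
    and dist_sym: "\<forall>u\<in>V. \<forall>v\<in>V. dst u v = dst v u"
    and dist_nonneg: "\<forall>u\<in>V. \<forall>v\<in>V. 0 \<le> dst u v"
    and dist_diag: "\<forall>u\<in>V. dst u u = 0"
    and d0_nonneg: "0 \<le> d0"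
    and gamma_nonneg: "0 \<le> \<gamma>"
    and V'_ne: "V - S \<noteq> {}"
  defines "V' \<equiv> V - S"
    and "R \<equiv> (\<lambda>A. vol g A + vol g S * unit_set A + \<gamma> * pen p M k l dst d0 A)"
    and "aS \<equiv> assocS w V S"
  shows
    "(\<forall>f\<in>nonneg_nonzero V'.
        ratio (lovasz R V' f) (lovasz aS V' f)
          \<ge> Min ((\<lambda>i. ratio (R (thr V' f i)) (aS (thr V' f i))) ` V'))
   \<and> ((\<exists>f\<in>nonneg_nonzero V'. ratio (lovasz R V' f) (lovasz aS V' f)
            = Min {ratio (R A) (aS A) | A. A \<subseteq> V' \<and> A \<noteq> {}})
      \<and> (\<forall>f\<in>nonneg_nonzero V'. Min {ratio (R A) (aS A) | A. A \<subseteq> V' \<and> A \<noteq> {}}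
            \<le> ratio (lovasz R V' f) (lovasz aS V' f)))
   \<and> (\<forall>fs\<in>nonneg_nonzero V'.
        (\<forall>h\<in>nonneg_nonzero V'. ratio (lovasz R V' fs) (lovasz aS V' fs)
                               \<le> ratio (lovasz R V' h) (lovasz aS V' h)) \<longrightarrow>
        (\<forall>i\<in>V'. (\<forall>j\<in>V'. ratio (R (thr V' fs i)) (aS (thr V' fs i))
                          \<le> ratio (R (thr V' fs j)) (aS (thr V' fs j))) \<longrightarrow>
                 (\<forall>B. B \<subseteq> V' \<and> B \<noteq> {} \<longrightarrow>
                      ratio (R (thr V' fs i)) (aS (thr V' fs i)) \<le> ratio (R B) (aS B))))"
proof -
  have fin: "finite V'" unfolding V'_def using finV by simp
  have ne: "V' \<noteq> {}" unfolding V'_def using V'_ne .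
  have V'V: "V' \<subseteq> V" unfolding V'_def by auto
  have R0: "\<forall>A. A \<subseteq> V' \<longrightarrow> 0 \<le> R A"
  proof (intro allI impI)
    fix A assume A: "A \<subseteq> V'"
    have "0 \<le> vol g A" unfolding vol_def using A V'V g_pos
      by (intro sum_nonneg) (auto intro: less_imp_le)
    moreover have "0 \<le> vol g S" unfolding vol_def using SV g_pos
      by (intro sum_nonneg) (auto intro: less_imp_le)
    moreover have "0 \<le> unit_set A" by (simp add: unit_set_def)
    moreover have "0 \<le> pen p M k l dst d0 A" unfolding pen_def
      by (auto intro!: sum_nonneg add_nonneg_nonneg)
    ultimately show "0 \<le> R A" unfolding R_def using gamma_nonneg by simp
  qed
  have a0: "\<forall>A. A \<subseteq> V' \<longrightarrow> 0 \<le> aS A"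
  proof (intro allI impI)
    fix A assume A: "A \<subseteq> V'"
    have c: "(\<Sum>i\<in>A. \<Sum>j\<in>V' - A. w i j) \<le> (\<Sum>i\<in>A. \<Sum>j\<in>V. w i j)"
    proof (rule sum_mono)
      fix i assume i: "i \<in> A"
      show "(\<Sum>j\<in>V' - A. w i j) \<le> (\<Sum>j\<in>V. w i j)"
        by (rule sum_mono2) (use finV V'V A i w_nonneg in auto)
    qed
    have "0 \<le> (\<Sum>i\<in>A. \<Sum>j\<in>S. w i j)" using A V'V SV w_nonneg
      by (intro sum_nonneg) (auto intro!: sum_nonneg simp: subset_iff)
    moreover have "0 \<le> assoc w S" unfolding assoc_def using SV w_nonneg
      by (auto intro!: sum_nonneg)
    moreover have "0 \<le> unit_set A" by (simp add: unit_set_def)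
    ultimately show "0 \<le> aS A" unfolding aS_def assocS_def vol_def cut_def
      using c V'_def by simp
  qed
  have P1: "\<forall>f\<in>nonneg_nonzero V'. Min ((\<lambda>i. ratio (R (thr V' f i)) (aS (thr V' f i))) ` V')
           \<le> ratio (lovasz R V' f) (lovasz aS V' f)"
    using part1[OF fin ne _ R0 a0] by blast
  define Q where "Q = {ratio (R A) (aS A) | A. A \<subseteq> V' \<and> A \<noteq> {}}"
  have Qim: "Q = (\<lambda>A. ratio (R A) (aS A)) ` {A. A \<subseteq> V' \<and> A \<noteq> {}}" unfolding Q_def by auto
  have Qfin: "finite Q" unfolding Qim using fin by simp
  have Qne: "Q \<noteq> {}" unfolding Q_def using ne by blast
  have thrQ: "ratio (R (thr V' f i)) (aS (thr V' f i)) \<in> Q" if "i \<in> V'" for f i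
  proof -
    have "thr V' f i \<subseteq> V'" "i \<in> thr V' f i" using that by (auto simp: thr_def)
    thus ?thesis unfolding Q_def by blast
  qed
  have lowQ: "Min Q \<le> ratio (lovasz R V' f) (lovasz aS V' f)" if f: "f \<in> nonneg_nonzero V'" for f
  proof -
    have "Min ((\<lambda>i. ratio (R (thr V' f i)) (aS (thr V' f i))) ` V')
       \<in> (\<lambda>i. ratio (R (thr V' f i)) (aS (thr V' f i))) ` V'"
      using fin ne by (intro Min_in) auto
    hence "Min ((\<lambda>i. ratio (R (thr V' f i)) (aS (thr V' f i))) ` V') \<in> Q" using thrQ by auto
    hence "Min Q \<le> Min ((\<lambda>i. ratio (R (thr V' f i)) (aS (thr V' f i))) ` V')"
      using Qfin by (rule Min_le[rotated])
    thus ?thesis using P1 f by (meson order_trans)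
  qed
  have ind: "(\<lambda>x. if x \<in> A then 1 else 0) \<in> nonneg_nonzero V' \<and>
     ratio (lovasz R V' (\<lambda>x. if x \<in> A then 1 else 0)) (lovasz aS V' (\<lambda>x. if x \<in> A then 1 else 0))
      = ratio (R A) (aS A)" if A: "A \<subseteq> V'" "A \<noteq> {}" for A
  proof
    show "(\<lambda>x. if x \<in> A then 1 else 0) \<in> nonneg_nonzero V'"
      unfolding nonneg_nonzero_def using A by auto
    show "ratio (lovasz R V' (\<lambda>x. if x \<in> A then 1 else 0)) (lovasz aS V' (\<lambda>x. if x \<in> A then 1 else 0))
      = ratio (R A) (aS A)" using lovasz_ind[OF fin A] by simp
  qed
  have part2: "\<exists>f\<in>nonneg_nonzero V'. ratio (lovasz R V' f) (lovasz aS V' f) = Min Q"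
  proof -
    have "Min Q \<in> Q" using Qfin Qne by (rule Min_in)
    then obtain A where A: "A \<subseteq> V'" "A \<noteq> {}" "Min Q = ratio (R A) (aS A)" unfolding Q_def by blast
    show ?thesis using ind[OF A(1,2)] A(3) by metis
  qed
  have part3: "\<forall>fs\<in>nonneg_nonzero V'.
        (\<forall>h\<in>nonneg_nonzero V'. ratio (lovasz R V' fs) (lovasz aS V' fs)
                               \<le> ratio (lovasz R V' h) (lovasz aS V' h)) \<longrightarrow>
        (\<forall>i\<in>V'. (\<forall>j\<in>V'. ratio (R (thr V' fs i)) (aS (thr V' fs i))
                          \<le> ratio (R (thr V' fs j)) (aS (thr V' fs j))) \<longrightarrow>
                 (\<forall>B. B \<subseteq> V' \<and> B \<noteq> {} \<longrightarrow>
                      ratio (R (thr V' fs i)) (aS (thr V' fs i)) \<le> ratio (R B) (aS B)))"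
  proof (intro ballI impI allI)
    fix fs i B
    assume fs: "fs \<in> nonneg_nonzero V'"
      and hmin: "\<forall>h\<in>nonneg_nonzero V'. ratio (lovasz R V' fs) (lovasz aS V' fs)
                               \<le> ratio (lovasz R V' h) (lovasz aS V' h)"
      and i: "i \<in> V'"
      and imin: "\<forall>j\<in>V'. ratio (R (thr V' fs i)) (aS (thr V' fs i))
                          \<le> ratio (R (thr V' fs j)) (aS (thr V' fs j))"
      and B: "B \<subseteq> V' \<and> B \<noteq> {}"
    have "ratio (R (thr V' fs i)) (aS (thr V' fs i))
        \<le> Min ((\<lambda>i. ratio (R (thr V' fs i)) (aS (thr V' fs i))) ` V')"
      using fin ne imin by (intro Min.boundedI) auto
    also have "\<dots> \<le> ratio (lovasz R V' fs) (lovasz aS V' fs)" using P1 fs by blast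
    also have "\<dots> \<le> ratio (R B) (aS B)" using hmin ind[of B] B by metis
    finally show "ratio (R (thr V' fs i)) (aS (thr V' fs i)) \<le> ratio (R B) (aS B)" .
  qed
  show ?thesis using P1 part2 lowQ part3 unfolding Q_def by blast
qed

end
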